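(* Let $f \in \mathcal{H}$ be such that $f(t)/t^{-n} \to 0$ as $t\to\infty$ for every $n \in \mathbb{N}$. Then for all $\ell, n \in \mathbb{N}$ we have $f^{(\ell)}(t)/t^{-n} \to 0$ as $t \to\infty$.
   Context: $\mathcal{H}$ denotes the union of all Hardy fields, where a Hardy field is a subfield of the ring of germs at $+\infty$ of real-valued functions defined on half-lines $(c,\infty)$ which is closed under differentiation (so every element of $\mathcal{H}$ is eventually infinitely differentiable and its derivatives lie in $\mathcal{H}$). *)

theory Defs
  imports "HOL-Analysis.Analysis"
begin

text \<open>Germs at +infinity of real functions are represented by functions real => real;
  a set of germs is represented by a set of representatives that is closed under
  eventual equality at at_top.\<close>

definition hardy_field :: "(real \<Rightarrow> real) set \<Rightarrow> bool" where
  "hardy_field F \<longleftrightarrow>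
     (\<forall>f\<in>F. \<forall>g. eventually (\<lambda>t. f t = g t) at_top \<longrightarrow> g \<in> F) \<and>
     (\<lambda>_. 0) \<in> F \<and> (\<lambda>_. 1) \<in> F \<and>
     (\<forall>f\<in>F. \<forall>g\<in>F. (\<lambda>t. f t + g t) \<in> F) \<and>
     (\<forall>f\<in>F. (\<lambda>t. - f t) \<in> F) \<and>
     (\<forall>f\<in>F. \<forall>g\<in>F. (\<lambda>t. f t * g t) \<in> F) \<and>
     (\<forall>f\<in>F. \<not> eventually (\<lambda>t. f t = 0) at_top \<longrightarrow>
        (\<exists>g\<in>F. eventually (\<lambda>t. f t * g t = 1) at_top)) \<and>
     (\<forall>f\<in>F. (\<exists>c. \<forall>t>c. f differentiable (at t)) \<and> deriv f \<in> F)"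

definition hardy_union :: "(real \<Rightarrow> real) set" where
  "hardy_union = {f. \<exists>F. hardy_field F \<and> f \<in> F}"

end

theory Submission
  imports Defs
begin

lemma hf_deriv_in: "hardy_field F \<Longrightarrow> g \<in> F \<Longrightarrow> deriv g \<in> F"
  unfolding hardy_field_def by blast

lemma hf_diff: "hardy_field F \<Longrightarrow> g \<in> F \<Longrightarrow> \<exists>c. \<forall>t>c. (g has_real_derivative deriv g t) (at t)"
  unfolding hardy_field_def using DERIV_deriv_iff_real_differentiable by blast

lemma hf_inv: "hardy_field F \<Longrightarrow> g \<in> F \<Longrightarrow> \<not> eventually (\<lambda>t. g t = 0) at_top \<Longrightarrow>
   eventually (\<lambda>t. g t \<noteq> 0) at_top"
proof -
  assume F: "hardy_field F" and g: "g \<in> F" and ne: "\<not> eventually (\<lambda>t. g t = 0) at_top"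
  then obtain h where "eventually (\<lambda>t. g t * h t = 1) at_top"
    unfolding hardy_field_def by blast
  then show ?thesis by (rule eventually_mono) auto
qed

lemma hf_sign:
  assumes F: "hardy_field F" and g: "g \<in> F"
  shows "\<exists>c. (\<forall>t>c. g t \<ge> 0) \<or> (\<forall>t>c. g t \<le> 0)"
proof (cases "eventually (\<lambda>t. g t = 0) at_top")
  case True
  then obtain c where "\<forall>t\<ge>c. g t = 0" unfolding eventually_at_top_linorder by blast
  then show ?thesis by (intro exI[of _ c]) auto
next
  case False
  from hf_inv[OF F g False] obtain c1 where c1: "\<And>t. t \<ge> c1 \<Longrightarrow> g t \<noteq> 0"
    unfolding eventually_at_top_linorder by blast
  from hf_diff[OF F g] obtain c2 where c2: "\<And>t. t > c2 \<Longrightarrow> (g has_real_derivative deriv g t) (at t)"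
    by blast
  define c where "c = max c1 (c2 + 1)"
  have nz: "\<And>t. t \<ge> c \<Longrightarrow> g t \<noteq> 0" using c1 unfolding c_def by auto
  have cont: "\<And>a b. c \<le> a \<Longrightarrow> continuous_on {a..b} g"
  proof -
    fix a b assume "c \<le> a"
    then have "\<forall>t\<in>{a..b}. isCont g t" using c2 DERIV_isCont unfolding c_def by force
    then show "continuous_on {a..b} g" by (simp add: continuous_at_imp_continuous_on)
  qed
  show ?thesis
  proof (cases "g c > 0")
    case True
    have "\<forall>t>c. g t \<ge> 0"
    proof (intro allI impI, rule ccontr)
      fix t assume t: "t > c" "\<not> g t \<ge> 0"
      then obtain x where "c \<le> x" "x \<le> t" "g x = 0"
        using IVT2'[of g t 0 c] cont[of c t] True by force
      then show False using nz by auto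
    qed
    then show ?thesis by blast
  next
    case False
    then have gc: "g c < 0" using nz[of c] by auto
    have "\<forall>t>c. g t \<le> 0"
    proof (intro allI impI, rule ccontr)
      fix t assume t: "t > c" "\<not> g t \<le> 0"
      then obtain x where "c \<le> x" "x \<le> t" "g x = 0"
        using IVT'[of g c 0 t] cont[of c t] gc by force
      then show False using nz by auto
    qed
    then show ?thesis by blast
  qed
qed

lemma mono_from_deriv:
  fixes g g' :: "real \<Rightarrow> real"
  assumes d: "\<And>t. t > c \<Longrightarrow> (g has_real_derivative g' t) (at t)"
    and s: "(\<forall>t>c. g' t \<ge> 0) \<or> (\<forall>t>c. g' t \<le> 0)"
  shows "(\<forall>x y. c < x \<longrightarrow> x \<le> y \<longrightarrow> g x \<le> g y) \<or> (\<forall>x y. c < x \<longrightarrow> x \<le> y \<longrightarrow> g y \<le> g x)"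
  using s
proof
  assume p: "\<forall>t>c. g' t \<ge> 0"
  have "g x \<le> g y" if "c < x" "x \<le> y" for x y
    by (rule DERIV_nonneg_imp_nondecreasing[OF that(2)]) 
      (use that d p in \<open>meson order_less_le_trans\<close>)
  then show ?thesis by blast
next
  assume p: "\<forall>t>c. g' t \<le> 0"
  have "g y \<le> g x" if "c < x" "x \<le> y" for x y
    by (rule DERIV_nonpos_imp_nonincreasing[OF that(2)]) 
      (use that d p in \<open>meson order_less_le_trans\<close>)
  then show ?thesis by blast
qed

lemma half_at_top: "filterlim (\<lambda>t::real. t / 2) at_top at_top"
proof -
  have "filterlim (\<lambda>t::real. (1/2) * t) at_top at_top"
    by (rule filterlim_tendsto_pos_mult_at_top[OF tendsto_const]) (auto simp: filterlim_ident)
  then show ?thesis by simp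
qed

lemma double_at_top: "filterlim (\<lambda>t::real. 2 * t) at_top at_top"
  by (rule filterlim_tendsto_pos_mult_at_top[OF tendsto_const]) (auto simp: filterlim_ident)

lemma aux_half: "(a::real) * (t/2) \<le> b1 + b2 \<Longrightarrow> 0 \<le> c \<Longrightarrow> a * t \<le> 2 * (b1 + b2 + c)"
  by (simp add: field_simps)

lemma aux_one: "(a::real) * t \<le> b2 + b1 \<Longrightarrow> 0 \<le> b1 \<Longrightarrow> 0 \<le> b2 \<Longrightarrow> 0 \<le> c \<Longrightarrow> a * t \<le> 2 * (b1 + c + b2)"
  by simp

lemma step:
  assumes F: "hardy_field F" and g: "g \<in> F"
    and P: "\<And>n. ((\<lambda>t. g t * t ^ n) \<longlongrightarrow> 0) at_top"
  shows "((\<lambda>t. deriv g t * t ^ n) \<longlongrightarrow> 0) at_top"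
proof -
  define g' where "g' = deriv g"
  define g'' where "g'' = deriv g'"
  have g'F: "g' \<in> F" unfolding g'_def using hf_deriv_in[OF F g] .
  have g''F: "g'' \<in> F" unfolding g''_def using hf_deriv_in[OF F g'F] .
  obtain c1 where d1: "\<And>t. t > c1 \<Longrightarrow> (g has_real_derivative g' t) (at t)"
    using hf_diff[OF F g] unfolding g'_def by blast
  obtain c2 where d2: "\<And>t. t > c2 \<Longrightarrow> (g' has_real_derivative g'' t) (at t)"
    using hf_diff[OF F g'F] unfolding g''_def by blast
  obtain c3 where s3: "(\<forall>t>c3. g' t \<ge> 0) \<or> (\<forall>t>c3. g' t \<le> 0)"
    using hf_sign[OF F g'F] by blast
  obtain c4 where s4: "(\<forall>t>c4. g'' t \<ge> 0) \<or> (\<forall>t>c4. g'' t \<le> 0)"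
    using hf_sign[OF F g''F] by blast
  define c where "c = max (max c1 c2) (max c3 (max c4 1))"
  have c: "c \<ge> c1" "c \<ge> c2" "c \<ge> c3" "c \<ge> c4" "c \<ge> 1" unfolding c_def by auto
  have s4': "(\<forall>t>c. g'' t \<ge> 0) \<or> (\<forall>t>c. g'' t \<le> 0)" using s4 c by force
  have s3': "(\<forall>t>c. g' t \<ge> 0) \<or> (\<forall>t>c. g' t \<le> 0)" using s3 c by force
  have mono: "(\<forall>x y. c < x \<longrightarrow> x \<le> y \<longrightarrow> g' x \<le> g' y) \<or> (\<forall>x y. c < x \<longrightarrow> x \<le> y \<longrightarrow> g' y \<le> g' x)"
    by (rule mono_from_deriv[OF _ s4']) (use d2 c in force)
  have absmono: "(\<forall>x y. c < x \<longrightarrow> x \<le> y \<longrightarrow> \<bar>g' y\<bar> \<le> \<bar>g' x\<bar>) \<or>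
      (\<forall>x y. c < x \<longrightarrow> x \<le> y \<longrightarrow> \<bar>g' x\<bar> \<le> \<bar>g' y\<bar>)"
  proof (cases "\<forall>t>c. g' t \<ge> 0")
    case True
    then show ?thesis using mono
      by (smt (verit, best) order_less_le_trans)
  next
    case False
    then have "\<forall>t>c. g' t \<le> 0" using s3' by blast
    then show ?thesis using mono
      by (smt (verit, best) order_less_le_trans)
  qed
  define G where "G t = 2 * (\<bar>g t * t ^ n\<bar> + \<bar>g (t/2) * t ^ n\<bar> + \<bar>g (2*t) * t ^ n\<bar>)" for t
  have bound: "\<bar>g' t * t ^ n\<bar> \<le> G t" if t: "t > 2 * c" for t
  proof -
    have t1: "t \<ge> 1" "t/2 > c" using t c by auto
    have key: "\<bar>g' t\<bar> * t \<le> 2 * (\<bar>g t\<bar> + \<bar>g (t/2)\<bar> + \<bar>g (2*t)\<bar>)"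
      using absmono
    proof
      assume dec: "\<forall>x y. c < x \<longrightarrow> x \<le> y \<longrightarrow> \<bar>g' y\<bar> \<le> \<bar>g' x\<bar>"
      obtain z where z: "t/2 < z" "z < t" "g t - g (t/2) = (t - t/2) * g' z"
        using MVT2[of "t/2" t g g'] d1 t1 c by force
      have "\<bar>g' t\<bar> \<le> \<bar>g' z\<bar>" using dec z t1 by auto
      then have "\<bar>g' t\<bar> * (t/2) \<le> \<bar>g' z\<bar> * (t/2)" using t1 by (intro mult_right_mono) auto
      also have "\<dots> = \<bar>(t - t/2) * g' z\<bar>" using t1 by (simp add: abs_mult)
      also have "\<dots> = \<bar>g t - g (t/2)\<bar>" by (simp only: z(3))
      also have "\<dots> \<le> \<bar>g t\<bar> + \<bar>g (t/2)\<bar>" by (rule abs_triangle_ineq4)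
      finally have "\<bar>g' t\<bar> * (t/2) \<le> \<bar>g t\<bar> + \<bar>g (t/2)\<bar>" .
      then show ?thesis using abs_ge_zero[of "g (2*t)"] by (rule aux_half)
    next
      assume inc: "\<forall>x y. c < x \<longrightarrow> x \<le> y \<longrightarrow> \<bar>g' x\<bar> \<le> \<bar>g' y\<bar>"
      obtain z where z: "t < z" "z < 2*t" "g (2*t) - g t = (2*t - t) * g' z"
        using MVT2[of t "2*t" g g'] d1 t1 c by force
      have "\<bar>g' t\<bar> \<le> \<bar>g' z\<bar>" using inc z t1 by auto
      then have "\<bar>g' t\<bar> * t \<le> \<bar>g' z\<bar> * t" using t1 by (intro mult_right_mono) auto
      also have "\<dots> = \<bar>(2*t - t) * g' z\<bar>" using t1 by (simp add: abs_mult)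
      also have "\<dots> = \<bar>g (2*t) - g t\<bar>" by (simp only: z(3))
      also have "\<dots> \<le> \<bar>g (2*t)\<bar> + \<bar>g t\<bar>" by (rule abs_triangle_ineq4)
      finally have "\<bar>g' t\<bar> * t \<le> \<bar>g (2*t)\<bar> + \<bar>g t\<bar>" .
      then show ?thesis using abs_ge_zero[of "g t"] abs_ge_zero[of "g (2*t)"] abs_ge_zero[of "g (t/2)"] by (rule aux_one)
    qed
    have tn: "t ^ n \<ge> 0" using t1 by simp
    have "\<bar>g' t * t ^ n\<bar> = \<bar>g' t\<bar> * t ^ n" using tn by (simp add: abs_mult)
    also have "\<dots> \<le> \<bar>g' t\<bar> * t * t ^ n"
    proof -
      have "\<bar>g' t\<bar> \<le> \<bar>g' t\<bar> * t" using t1 mult_left_mono[of 1 t "\<bar>g' t\<bar>"] by simp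
      then show ?thesis using tn by (rule mult_right_mono)
    qed
    also have "\<dots> \<le> 2 * (\<bar>g t\<bar> + \<bar>g (t/2)\<bar> + \<bar>g (2*t)\<bar>) * t ^ n"
      using key tn by (rule mult_right_mono)
    also have "\<dots> = G t" unfolding G_def using tn by (simp add: abs_mult algebra_simps)
    finally show ?thesis .
  qed
  have L1: "((\<lambda>t. g (t/2) * t ^ n) \<longlongrightarrow> 0) at_top"
  proof -
    have "((\<lambda>t. g (t/2) * (t/2) ^ n) \<longlongrightarrow> 0) at_top"
      using filterlim_compose[OF P[of n] half_at_top] by (simp add: o_def)
    then have "((\<lambda>t. 2 ^ n * (g (t/2) * (t/2) ^ n)) \<longlongrightarrow> 0) at_top"
      by (rule tendsto_mult_right_zero)
    then show ?thesis by (simp add: power_divide)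
  qed
  have L2: "((\<lambda>t. g (2*t) * t ^ n) \<longlongrightarrow> 0) at_top"
  proof -
    have "((\<lambda>t. g (2*t) * (2*t) ^ n) \<longlongrightarrow> 0) at_top"
      using filterlim_compose[OF P[of n] double_at_top] by (simp add: o_def)
    then have "((\<lambda>t. (1/2) ^ n * (g (2*t) * (2*t) ^ n)) \<longlongrightarrow> 0) at_top"
      by (rule tendsto_mult_right_zero)
    then show ?thesis by (simp add: power_mult_distrib power_divide)
  qed
  have "(G \<longlongrightarrow> 0) at_top"
    unfolding G_def
    using tendsto_mult_right_zero[OF tendsto_add_zero[OF tendsto_add_zero[OF
        tendsto_rabs_zero[OF P[of n]] tendsto_rabs_zero[OF L1]] tendsto_rabs_zero[OF L2]], of 2]
    by simp
  moreover have "eventually (\<lambda>t. norm (g' t * t ^ n) \<le> G t) at_top"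
    using bound unfolding eventually_at_top_dense real_norm_def by blast
  ultimately show ?thesis unfolding g'_def[symmetric] by (rule Lim_null_comparison[rotated])
qed

lemma conv:
  fixes h :: "real \<Rightarrow> real"
  shows "((\<lambda>t. h t / t powr (- real n)) \<longlongrightarrow> 0) at_top \<longleftrightarrow> ((\<lambda>t. h t * t ^ n) \<longlongrightarrow> 0) at_top"
proof (rule tendsto_cong)
  show "\<forall>\<^sub>F t in at_top. h t / t powr (- real n) = h t * t ^ n"
    using eventually_gt_at_top[of 0]
    by eventually_elim (simp add: powr_minus powr_realpow divide_inverse)
qed

theorem lemma2p5:
  fixes f :: "real \<Rightarrow> real"
  assumes "f \<in> hardy_union"
    and "\<forall>n::nat. ((\<lambda>t. f t / t powr (- real n)) \<longlongrightarrow> 0) at_top"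
  shows "\<forall>l n::nat. ((\<lambda>t. (deriv ^^ l) f t / t powr (- real n)) \<longlongrightarrow> 0) at_top"
proof -
  obtain F where F: "hardy_field F" and fF: "f \<in> F"
    using assms(1) unfolding hardy_union_def by blast
  have "(deriv ^^ l) f \<in> F \<and> (\<forall>n. ((\<lambda>t. (deriv ^^ l) f t * t ^ n) \<longlongrightarrow> 0) at_top)" for l
  proof (induction l)
    case 0
    then show ?case using fF assms(2) conv by simp
  next
    case (Suc l)
    then show ?case using step[OF F, of "(deriv ^^ l) f"] hf_deriv_in[OF F, of "(deriv ^^ l) f"]
      by simp
  qed
  then show ?thesis using conv by blast
qed

end
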